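(* Let $\Omega\subseteq\mathbb{R}^n$ ($n\ge 1$) be a bounded measurable set, $Y$ a Hilbert space, $S:L^2(\Omega)\to Y$ linear and continuous, $u_a,u_b\in L^\infty(\Omega)$ with $U_{\text{ad}}:=\{u\in L^2(\Omega):\ u_a\le u\le u_b \text{ a.e.}\}\neq\emptyset$, and let $(\alpha_k)_{k\ge1}$ be a uniformly bounded sequence of positive reals. Let $z,z^\delta\in Y$ with $\|z-z^\delta\|_Y\le\delta$, $\delta\ge 0$. Let $(u_k)_k$ and $(u_k^\delta)_k$ be the sequences generated by the Bregman iteration (described in the context) with data $z$ and $z^\delta$, respectively. Then for every $k\ge1$, $$\sum_{i=1}^k \frac{1}{\alpha_i}\|u_i^\delta-u_i\|_{L^2(\Omega)}^2\le \delta^2\sum_{i=1}^k\Big(\frac{1}{\alpha_i^2}+\gamma_{i-1}^2\Big),$$ where $\gamma_k:=\sum_{j=1}^k \frac{1}{\alpha_j}$ and $\gamma_0:=0$.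
   Context: Define $J:L^2(\Omega)\to\mathbb{R}\cup\{+\infty\}$ by $J(u)=\frac12\|u\|^2+I_{U_{\text{ad}}}(u)$, where $I_{U_{\text{ad}}}$ is the indicator function ($0$ on $U_{\text{ad}}$, $+\infty$ otherwise), and for $\lambda\in\partial J(v)$ the Bregman distance $D^\lambda(u,v):=J(u)-J(v)-(u-v,\lambda)_{L^2}$. The Bregman iteration with data $\zeta\in Y$ is: set $u_0=P_{U_{\text{ad}}}(0)$ (pointwise projection onto $[u_a,u_b]$), $\lambda_0=0\in\partial J(u_0)$; for $k=1,2,\dots$ let $u_k$ be the (unique) minimizer of $u\mapsto\frac12\|Su-\zeta\|_Y^2+\alpha_k D^{\lambda_{k-1}}(u,u_{k-1})$ over $L^2(\Omega)$, then set $\mu_k:=\sum_{i=1}^k\frac{1}{\alpha_i}(\zeta-Su_i)$ and $\lambda_k:=S^\ast\mu_k$. The sequence $(u_k^\delta)_k$ is obtained with $\zeta=z^\delta$ (with corresponding $\lambda_k^\delta$), and $(u_k)_k$ with $\zeta=z$. *)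

theory Defs
  imports "HOL-Analysis.Analysis"
begin

text \<open>Elements of L2(Omega) are represented by real functions on real^'n that are
  Lebesgue measurable on Omega and square integrable on Omega (equality a.e. is
  respected by all notions below).\<close>

definition L2 :: "(real^'n) set \<Rightarrow> (real^'n \<Rightarrow> real) set" where
  "L2 \<Omega> = {u. u \<in> borel_measurable (lebesgue_on \<Omega>) \<and>
                 integrable (lebesgue_on \<Omega>) (\<lambda>x. (u x)^2)}"

definition L2_inner :: "(real^'n) set \<Rightarrow> (real^'n \<Rightarrow> real) \<Rightarrow> (real^'n \<Rightarrow> real) \<Rightarrow> real" where
  "L2_inner \<Omega> u v = (LINT x|lebesgue_on \<Omega>. u x * v x)"

definition L2_norm :: "(real^'n) set \<Rightarrow> (real^'n \<Rightarrow> real) \<Rightarrow> real" where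
  "L2_norm \<Omega> u = sqrt (LINT x|lebesgue_on \<Omega>. (u x)^2)"

definition Linf :: "(real^'n) set \<Rightarrow> (real^'n \<Rightarrow> real) set" where
  "Linf \<Omega> = {u. u \<in> borel_measurable (lebesgue_on \<Omega>) \<and>
                 (\<exists>C. AE x in lebesgue_on \<Omega>. \<bar>u x\<bar> \<le> C)}"

definition Uad :: "(real^'n) set \<Rightarrow> (real^'n \<Rightarrow> real) \<Rightarrow> (real^'n \<Rightarrow> real) \<Rightarrow> (real^'n \<Rightarrow> real) set" where
  "Uad \<Omega> ua ub = {u \<in> L2 \<Omega>. AE x in lebesgue_on \<Omega>. ua x \<le> u x \<and> u x \<le> ub x}"

definition Jfun :: "(real^'n) set \<Rightarrow> (real^'n \<Rightarrow> real) \<Rightarrow> (real^'n \<Rightarrow> real) \<Rightarrow> (real^'n \<Rightarrow> real) \<Rightarrow> ereal" where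
  "Jfun \<Omega> ua ub u = (if u \<in> Uad \<Omega> ua ub then ereal ((L2_norm \<Omega> u)^2 / 2) else \<infinity>)"

definition bregman_dist :: "(real^'n) set \<Rightarrow> (real^'n \<Rightarrow> real) \<Rightarrow> (real^'n \<Rightarrow> real) \<Rightarrow>
    (real^'n \<Rightarrow> real) \<Rightarrow> (real^'n \<Rightarrow> real) \<Rightarrow> (real^'n \<Rightarrow> real) \<Rightarrow> ereal" where
  "bregman_dist \<Omega> ua ub lam u v =
     Jfun \<Omega> ua ub u - Jfun \<Omega> ua ub v - ereal (L2_inner \<Omega> (\<lambda>x. u x - v x) lam)"

text \<open>w is (a representative of) the adjoint S^* applied to mu.\<close>
definition is_adjoint_val :: "(real^'n) set \<Rightarrow> ((real^'n \<Rightarrow> real) \<Rightarrow> 'y::real_inner) \<Rightarrow> 'y \<Rightarrow> (real^'n \<Rightarrow> real) \<Rightarrow> bool" where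
  "is_adjoint_val \<Omega> S mu w \<longleftrightarrow> w \<in> L2 \<Omega> \<and> (\<forall>u \<in> L2 \<Omega>. L2_inner \<Omega> u w = inner (S u) mu)"

definition proj0 :: "(real^'n \<Rightarrow> real) \<Rightarrow> (real^'n \<Rightarrow> real) \<Rightarrow> (real^'n \<Rightarrow> real)" where
  "proj0 ua ub = (\<lambda>x. min (max 0 (ua x)) (ub x))"

definition mu_seq :: "((real^'n \<Rightarrow> real) \<Rightarrow> 'y::real_vector) \<Rightarrow> (nat \<Rightarrow> real) \<Rightarrow> 'y \<Rightarrow>
    (nat \<Rightarrow> (real^'n \<Rightarrow> real)) \<Rightarrow> nat \<Rightarrow> 'y" where
  "mu_seq S \<alpha> \<zeta> u k = (\<Sum>i\<in>{1..k}. (1 / \<alpha> i) *\<^sub>R (\<zeta> - S (u i)))"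

definition bregman_iteration :: "(real^'n) set \<Rightarrow> ((real^'n \<Rightarrow> real) \<Rightarrow> 'y::real_inner) \<Rightarrow>
    (real^'n \<Rightarrow> real) \<Rightarrow> (real^'n \<Rightarrow> real) \<Rightarrow> (nat \<Rightarrow> real) \<Rightarrow> 'y \<Rightarrow>
    (nat \<Rightarrow> (real^'n \<Rightarrow> real)) \<Rightarrow> (nat \<Rightarrow> (real^'n \<Rightarrow> real)) \<Rightarrow> bool" where
  "bregman_iteration \<Omega> S ua ub \<alpha> \<zeta> u lam \<longleftrightarrow>
     u 0 = proj0 ua ub \<and> lam 0 = (\<lambda>x. 0) \<and>
     (\<forall>k. is_adjoint_val \<Omega> S (mu_seq S \<alpha> \<zeta> u k) (lam k)) \<and>
     (\<forall>k\<ge>1. u k \<in> L2 \<Omega> \<and>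
        (\<forall>v \<in> L2 \<Omega>.
           ereal ((norm (S (u k) - \<zeta>))^2 / 2) + ereal (\<alpha> k) * bregman_dist \<Omega> ua ub (lam (k - 1)) (u k) (u (k - 1))
           \<le> ereal ((norm (S v - \<zeta>))^2 / 2) + ereal (\<alpha> k) * bregman_dist \<Omega> ua ub (lam (k - 1)) v (u (k - 1))))"

definition gamma_seq :: "(nat \<Rightarrow> real) \<Rightarrow> nat \<Rightarrow> real" where
  "gamma_seq \<alpha> k = (\<Sum>j\<in>{1..k}. 1 / \<alpha> j)"

end

theory Submission
  imports Defs
begin

lemma L2_iff: "u \<in> L2 \<Omega> \<longleftrightarrow> u \<in> borel_measurable (lebesgue_on \<Omega>) \<and> integrable (lebesgue_on \<Omega>) (\<lambda>x. (u x)^2)"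
  by (simp add: L2_def)

lemma L2_prod_int:
  assumes "f \<in> L2 \<Omega>" "g \<in> L2 \<Omega>"
  shows "integrable (lebesgue_on \<Omega>) (\<lambda>x. f x * g x)"
proof (rule Bochner_Integration.integrable_bound[where f="\<lambda>x. (f x)^2 + (g x)^2"])
  show "integrable (lebesgue_on \<Omega>) (\<lambda>x. (f x)^2 + (g x)^2)"
    using assms by (auto simp: L2_iff)
  show "(\<lambda>x. f x * g x) \<in> borel_measurable (lebesgue_on \<Omega>)"
    using assms by (auto simp: L2_iff)
  show "AE x in lebesgue_on \<Omega>. norm (f x * g x) \<le> norm ((f x)^2 + (g x)^2)"
  proof (rule AE_I2)
    fix x
    have "0 \<le> (\<bar>f x\<bar> - \<bar>g x\<bar>)^2" by simp
    hence "2*\<bar>f x\<bar>*\<bar>g x\<bar> \<le> \<bar>f x\<bar>^2 + \<bar>g x\<bar>^2" by (simp add: power2_eq_square algebra_simps)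
    moreover have "0 \<le> \<bar>f x\<bar>*\<bar>g x\<bar>" by simp
    ultimately show "norm (f x * g x) \<le> norm ((f x)^2 + (g x)^2)" by (simp add: abs_mult; linarith)
  qed
qed

lemma L2_lin:
  assumes "f \<in> L2 \<Omega>" "g \<in> L2 \<Omega>"
  shows "(\<lambda>x. a * f x + b * g x) \<in> L2 \<Omega>"
proof -
  have i: "integrable (lebesgue_on \<Omega>) (\<lambda>x. f x * g x)" using L2_prod_int[OF assms] .
  have eq: "(\<lambda>x. (a * f x + b * g x)^2) = (\<lambda>x. a^2 * (f x)^2 + (2*a*b) * (f x * g x) + b^2 * (g x)^2)"
    by (auto simp: power2_eq_square algebra_simps)
  show ?thesis using assms i unfolding L2_iff eq by auto
qed

lemma L2_add: "f \<in> L2 \<Omega> \<Longrightarrow> g \<in> L2 \<Omega> \<Longrightarrow> (\<lambda>x. f x + g x) \<in> L2 \<Omega>"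
  using L2_lin[of f \<Omega> g 1 1] by simp
lemma L2_diff: "f \<in> L2 \<Omega> \<Longrightarrow> g \<in> L2 \<Omega> \<Longrightarrow> (\<lambda>x. f x - g x) \<in> L2 \<Omega>"
  using L2_lin[of f \<Omega> g 1 "-1"] by simp
lemma L2_cmult: "f \<in> L2 \<Omega> \<Longrightarrow> (\<lambda>x. c * f x) \<in> L2 \<Omega>"
  using L2_lin[of f \<Omega> f c 0] by simp

lemma L2_norm_sq: "L2_norm \<Omega> u ^ 2 = (LINT x|lebesgue_on \<Omega>. (u x)^2)"
  unfolding L2_norm_def by (simp add: integral_nonneg_AE)


lemma int_lin3:
  fixes f g h :: "'a \<Rightarrow> real"
  assumes "integrable M f" "integrable M g" "integrable M h"
  shows "(LINT x|M. f x + a * g x + b * h x) = (LINT x|M. f x) + a * (LINT x|M. g x) + b * (LINT x|M. h x)"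
proof -
  have "(LINT x|M. f x + a * g x + b * h x) = (LINT x|M. f x + a * g x) + (LINT x|M. b * h x)"
    using assms by (intro Bochner_Integration.integral_add) (auto intro!: Bochner_Integration.integrable_add integrable_mult_right)
  also have "(LINT x|M. f x + a * g x) = (LINT x|M. f x) + (LINT x|M. a * g x)"
    using assms by (intro Bochner_Integration.integral_add) auto
  finally show ?thesis by simp
qed

lemma int_lin2:
  fixes f g :: "'a \<Rightarrow> real"
  assumes "integrable M f" "integrable M g"
  shows "(LINT x|M. f x + a * g x) = (LINT x|M. f x) + a * (LINT x|M. g x)"
  using assms by (subst Bochner_Integration.integral_add) (auto intro!: integrable_mult_right)

lemma S_diff:
  fixes S :: "(real^'n \<Rightarrow> real) \<Rightarrow> 'y::real_vector"
  assumes S_add: "\<And>v w. v \<in> L2 \<Omega> \<Longrightarrow> w \<in> L2 \<Omega> \<Longrightarrow> S (\<lambda>x. v x + w x) = S v + S w"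
    and "v \<in> L2 \<Omega>" "w \<in> L2 \<Omega>"
  shows "S (\<lambda>x. v x - w x) = S v - S w"
proof -
  have 1: "S (\<lambda>x. v x - w x + w x) = S (\<lambda>x. v x - w x) + S w"
    by (rule S_add[OF L2_diff[OF assms(2,3)] assms(3)])
  have e: "(\<lambda>x. v x - w x + w x) = v" by (rule ext) simp
  have "S v = S (\<lambda>x. v x - w x) + S w" using 1 unfolding e .
  then show ?thesis by simp
qed

lemma S_comb:
  fixes S :: "(real^'n \<Rightarrow> real) \<Rightarrow> 'y::real_vector"
  assumes S_add: "\<And>v w. v \<in> L2 \<Omega> \<Longrightarrow> w \<in> L2 \<Omega> \<Longrightarrow> S (\<lambda>x. v x + w x) = S v + S w"
    and S_scale: "\<And>c v. v \<in> L2 \<Omega> \<Longrightarrow> S (\<lambda>x. c * v x) = c *\<^sub>R S v"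
    and "u \<in> L2 \<Omega>" "h \<in> L2 \<Omega>"
  shows "S (\<lambda>x. u x + t * h x) = S u + t *\<^sub>R S h"
proof -
  have 1: "S (\<lambda>x. u x + t * h x) = S u + S (\<lambda>x. t * h x)"
    by (rule S_add[OF assms(3) L2_cmult[OF assms(4)]])
  have 2: "S (\<lambda>x. t * h x) = t *\<^sub>R S h" by (rule S_scale[OF assms(4)])
  show ?thesis using 1 unfolding 2 .
qed

lemma norm_expand:
  fixes x d :: "'a::real_inner"
  shows "(norm (x + t *\<^sub>R d))^2 = (norm x)^2 + 2*t*inner x d + t^2 * (norm d)^2"
proof -
  have "(norm (x + t *\<^sub>R d))^2 = inner (x + t *\<^sub>R d) (x + t *\<^sub>R d)" by (simp only: power2_norm_eq_inner)
  also have "\<dots> = inner x x + 2*t*inner x d + t^2 * inner d d"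
    by (simp add: inner_add_left inner_add_right inner_commute power2_eq_square algebra_simps)
  finally show ?thesis by (simp only: power2_norm_eq_inner)
qed

lemma small_t:
  fixes A B :: real
  assumes "\<And>t. 0 < t \<Longrightarrow> t \<le> 1 \<Longrightarrow> 0 \<le> t*A + t^2*B"
  shows "0 \<le> A"
proof (rule ccontr)
  assume neg: "\<not> 0 \<le> A"
  show False
  proof (cases "B \<le> 0")
    case True
    have "0 \<le> 1*A + 1^2*B" using assms[of 1] by simp
    then show False using True neg by simp
  next
    case False
    define t where "t = min 1 (-A/(2*B))"
    have tpos: "0 < t" using False neg by (simp add: t_def field_simps)
    have tle: "t \<le> 1" by (simp add: t_def)
    have "t * B \<le> -A/2" using False by (simp add: t_def min_def field_simps split: if_splits)
    hence "A + t*B < 0" using neg by simp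
    hence "t * (A + t*B) < 0" using tpos by (simp add: mult_pos_neg)
    moreover have "0 \<le> t*A + t^2*B" using assms tpos tle by simp
    ultimately show False by (simp add: power2_eq_square algebra_simps)
  qed
qed

lemma Uad_comb:
  assumes "u \<in> Uad \<Omega> ua ub" "v \<in> Uad \<Omega> ua ub" "0 \<le> t" "t \<le> 1"
  shows "(\<lambda>x. u x + t * (v x - u x)) \<in> Uad \<Omega> ua ub"
proof -
  have L: "(\<lambda>x. u x + t * (v x - u x)) \<in> L2 \<Omega>"
    using assms by (intro L2_add L2_cmult L2_diff) (auto simp: Uad_def)
  have "AE x in lebesgue_on \<Omega>. ua x \<le> u x \<and> u x \<le> ub x" "AE x in lebesgue_on \<Omega>. ua x \<le> v x \<and> v x \<le> ub x"
    using assms by (auto simp: Uad_def)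
  then have "AE x in lebesgue_on \<Omega>. ua x \<le> u x + t * (v x - u x) \<and> u x + t * (v x - u x) \<le> ub x"
  proof eventually_elim
    case (elim x)
    have 1: "(1-t)*ua x \<le> (1-t)*u x" using elim assms by (intro mult_left_mono) auto
    have 2: "t*ua x \<le> t * v x" using elim assms by (intro mult_left_mono) auto
    have 3: "(1-t)*u x \<le> (1-t)*ub x" using elim assms by (intro mult_left_mono) auto
    have 4: "t * v x \<le> t*ub x" using elim assms by (intro mult_left_mono) auto
    have e: "u x + t * (v x - u x) = (1-t)*u x + t * v x" by (simp add: algebra_simps)
    have e1: "ua x = (1-t)*ua x + t*ua x" by (simp add: algebra_simps)
    have e2: "ub x = (1-t)*ub x + t*ub x" by (simp add: algebra_simps)
    show ?case using 1 2 3 4 e e1 e2 by linarith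
  qed
  then show ?thesis using L by (simp add: Uad_def)
qed

lemma proj0_Uad:
  assumes "\<Omega> \<in> sets lebesgue" "bounded \<Omega>" "ua \<in> Linf \<Omega>" "ub \<in> Linf \<Omega>" "Uad \<Omega> ua ub \<noteq> {}"
  shows "proj0 ua ub \<in> Uad \<Omega> ua ub"
proof -
  interpret finite_measure "lebesgue_on \<Omega>"
    using assms by (intro finite_measure_lebesgue_on bounded_set_imp_lmeasurable)
  obtain w where "w \<in> Uad \<Omega> ua ub" using assms by blast
  then have ab: "AE x in lebesgue_on \<Omega>. ua x \<le> ub x" by (auto simp: Uad_def elim: AE_mp)
  obtain Ca where Ca: "AE x in lebesgue_on \<Omega>. \<bar>ua x\<bar> \<le> Ca" using assms by (auto simp: Linf_def)
  obtain Cb where Cb: "AE x in lebesgue_on \<Omega>. \<bar>ub x\<bar> \<le> Cb" using assms by (auto simp: Linf_def)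
  have ma: "ua \<in> borel_measurable (lebesgue_on \<Omega>)" "ub \<in> borel_measurable (lebesgue_on \<Omega>)"
    using assms by (auto simp: Linf_def)
  have meas: "proj0 ua ub \<in> borel_measurable (lebesgue_on \<Omega>)"
    unfolding proj0_def using ma by measurable
  have "AE x in lebesgue_on \<Omega>. norm ((proj0 ua ub x)^2) \<le> (Ca + Cb)^2"
    using Ca Cb
  proof eventually_elim
    case (elim x)
    have "\<bar>proj0 ua ub x\<bar> \<le> Ca + Cb" using elim by (auto simp: proj0_def)
    then have "\<bar>proj0 ua ub x\<bar> \<le> \<bar>Ca + Cb\<bar>" by simp
    then show ?case by (simp add: abs_le_square_iff)
  qed
  then have "integrable (lebesgue_on \<Omega>) (\<lambda>x. (proj0 ua ub x)^2)"
    by (intro integrable_const_bound[where B="(Ca+Cb)^2"]) (use meas in auto)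
  moreover have "AE x in lebesgue_on \<Omega>. ua x \<le> proj0 ua ub x \<and> proj0 ua ub x \<le> ub x"
    using ab by eventually_elim (auto simp: proj0_def)
  ultimately show ?thesis using meas by (simp add: Uad_def L2_def)
qed


lemma alg_id:
  fixes t a X Y Z Dn H N U P I :: real
  shows "t*(X + a*(Y - Z)) + t^2*((Dn + a*H)/2) = (N + 2*t*X + t^2*Dn)/2 + a*((U + 2*t*Y + t^2*H)/2 - P - (I + t*Z)) - (N/2 + a*(U/2 - P - I))"
  by (simp add: field_simps power2_eq_square)

lemma iter_step:
  fixes S :: "(real^'n \<Rightarrow> real) \<Rightarrow> 'y::real_inner"
  assumes S_add: "\<And>v w. v \<in> L2 \<Omega> \<Longrightarrow> w \<in> L2 \<Omega> \<Longrightarrow> S (\<lambda>x. v x + w x) = S v + S w"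
    and S_scale: "\<And>c v. v \<in> L2 \<Omega> \<Longrightarrow> S (\<lambda>x. c * v x) = c *\<^sub>R S v"
    and apos: "a > 0"
    and uk: "uk \<in> L2 \<Omega>"
    and up: "up \<in> Uad \<Omega> ua ub"
    and lp: "lp \<in> L2 \<Omega>"
    and min: "\<forall>v \<in> L2 \<Omega>.
           ereal ((norm (S uk - \<zeta>))^2 / 2) + ereal a * bregman_dist \<Omega> ua ub lp uk up
           \<le> ereal ((norm (S v - \<zeta>))^2 / 2) + ereal a * bregman_dist \<Omega> ua ub lp v up"
  shows "uk \<in> Uad \<Omega> ua ub"
    and "\<And>v. v \<in> Uad \<Omega> ua ub \<Longrightarrow> 0 \<le> inner (S uk - \<zeta>) (S v - S uk)
            + a * (L2_inner \<Omega> uk (\<lambda>x. v x - uk x) - L2_inner \<Omega> (\<lambda>x. v x - uk x) lp)"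
proof -
  have upL: "up \<in> L2 \<Omega>" using up by (simp add: Uad_def)
  show ukU: "uk \<in> Uad \<Omega> ua ub"
  proof (rule ccontr)
    assume nU: "uk \<notin> Uad \<Omega> ua ub"
    have e1: "ereal ((norm (S uk - \<zeta>))^2 / 2) + ereal a * bregman_dist \<Omega> ua ub lp uk up = \<infinity>"
      using nU up apos by (simp add: bregman_dist_def Jfun_def)
    have e2: "ereal ((norm (S up - \<zeta>))^2 / 2) + ereal a * bregman_dist \<Omega> ua ub lp up up \<noteq> \<infinity>"
      using up by (simp add: bregman_dist_def Jfun_def)
    have le: "ereal ((norm (S uk - \<zeta>))^2 / 2) + ereal a * bregman_dist \<Omega> ua ub lp uk up
           \<le> ereal ((norm (S up - \<zeta>))^2 / 2) + ereal a * bregman_dist \<Omega> ua ub lp up up"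
      using min upL by (rule bspec)
    have gen: "\<And>X Y::ereal. X = \<infinity> \<Longrightarrow> Y \<noteq> \<infinity> \<Longrightarrow> X \<le> Y \<Longrightarrow> False" by auto
    show False using gen[OF e1 e2 le] .
  qed
  fix y assume vU: "y \<in> Uad \<Omega> ua ub"
  have vL: "y \<in> L2 \<Omega>" using vU by (simp add: Uad_def)
  define h where "h = (\<lambda>x. y x - uk x)"
  have hL: "h \<in> L2 \<Omega>" unfolding h_def using vL uk by (rule L2_diff)
  define D where "D = S y - S uk"
  have Sh: "S h = D" unfolding h_def D_def by (rule S_diff[where S=S and \<Omega>=\<Omega> and v=y and w=uk, OF S_add vL uk])
  define A where "A = inner (S uk - \<zeta>) D + a * (L2_inner \<Omega> uk h - L2_inner \<Omega> h lp)"
  define B where "B = ((norm D)^2 + a * (LINT x|lebesgue_on \<Omega>. (h x)^2)) / 2"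
  have "0 \<le> A"
  proof (rule small_t[where B=B])
    fix t :: real assume t: "0 < t" "t \<le> 1"
    define w where "w = (\<lambda>x. uk x + t * h x)"
    have wU: "w \<in> Uad \<Omega> ua ub" unfolding w_def h_def using Uad_comb[OF ukU vU] t by simp
    have wL: "w \<in> L2 \<Omega>" using wU by (simp add: Uad_def)
    have c: "S (\<lambda>x. uk x + t * h x) = S uk + t *\<^sub>R S h"
      by (rule S_comb[where S=S and \<Omega>=\<Omega> and u=uk and h=h and t=t, OF S_add S_scale uk hL])
    have Sw: "S w = S uk + t *\<^sub>R D" unfolding w_def c Sh ..
    have nS: "(norm (S w - \<zeta>))^2 = (norm (S uk - \<zeta>))^2 + 2*t*inner (S uk - \<zeta>) D + t^2 * (norm D)^2"
    proof -
      have "S w - \<zeta> = (S uk - \<zeta>) + t *\<^sub>R D" using Sw by (simp add: algebra_simps)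
      then show ?thesis using norm_expand[of "S uk - \<zeta>" t D] by (simp only:)
    qed
    have iuk: "integrable (lebesgue_on \<Omega>) (\<lambda>x. (uk x)^2)" using uk by (simp add: L2_def)
    have ih: "integrable (lebesgue_on \<Omega>) (\<lambda>x. (h x)^2)" using hL by (simp add: L2_def)
    have iukh: "integrable (lebesgue_on \<Omega>) (\<lambda>x. uk x * h x)" using L2_prod_int[OF uk hL] .
    have nw: "(L2_norm \<Omega> w)^2 = (L2_norm \<Omega> uk)^2 + 2*t*L2_inner \<Omega> uk h + t^2 * (LINT x|lebesgue_on \<Omega>. (h x)^2)"
    proof -
      have eq: "(\<lambda>x. (w x)^2) = (\<lambda>x. (uk x)^2 + (2*t) * (uk x * h x) + t^2 * (h x)^2)"
        unfolding w_def by (rule ext) (simp add: power2_eq_square algebra_simps)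
      show ?thesis unfolding L2_norm_sq L2_inner_def eq
        by (rule int_lin3[OF iuk iukh ih])
    qed
    have i1: "integrable (lebesgue_on \<Omega>) (\<lambda>x. (uk x - up x) * lp x)"
      using L2_prod_int[OF L2_diff[OF uk upL] lp] .
    have i2: "integrable (lebesgue_on \<Omega>) (\<lambda>x. h x * lp x)" using L2_prod_int[OF hL lp] .
    have iw: "L2_inner \<Omega> (\<lambda>x. w x - up x) lp = L2_inner \<Omega> (\<lambda>x. uk x - up x) lp + t * L2_inner \<Omega> h lp"
    proof -
      have eq: "(\<lambda>x. (w x - up x) * lp x) = (\<lambda>x. (uk x - up x) * lp x + t * (h x * lp x))"
        unfolding w_def by (rule ext) (simp add: algebra_simps)
      show ?thesis unfolding L2_inner_def eq
        by (rule int_lin2[OF i1 i2])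
    qed
    have mw: "ereal ((norm (S uk - \<zeta>))^2 / 2) + ereal a * bregman_dist \<Omega> ua ub lp uk up
           \<le> ereal ((norm (S w - \<zeta>))^2 / 2) + ereal a * bregman_dist \<Omega> ua ub lp w up"
      using min wL by (rule bspec)
    then have r: "(norm (S uk - \<zeta>))^2 / 2 + a * ((L2_norm \<Omega> uk)^2/2 - (L2_norm \<Omega> up)^2/2 - L2_inner \<Omega> (\<lambda>x. uk x - up x) lp)
       \<le> (norm (S w - \<zeta>))^2 / 2 + a * ((L2_norm \<Omega> w)^2/2 - (L2_norm \<Omega> up)^2/2 - L2_inner \<Omega> (\<lambda>x. w x - up x) lp)"
      using ukU wU up by (simp add: bregman_dist_def Jfun_def)
    have eq: "t*A + t^2*B = ((norm (S uk - \<zeta>))^2 + 2*t*inner (S uk - \<zeta>) D + t^2 * (norm D)^2) / 2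
        + a * (((L2_norm \<Omega> uk)^2 + 2*t*L2_inner \<Omega> uk h + t^2 * (LINT x|lebesgue_on \<Omega>. (h x)^2))/2 - (L2_norm \<Omega> up)^2/2
               - (L2_inner \<Omega> (\<lambda>x. uk x - up x) lp + t * L2_inner \<Omega> h lp))
        - ((norm (S uk - \<zeta>))^2 / 2 + a * ((L2_norm \<Omega> uk)^2/2 - (L2_norm \<Omega> up)^2/2 - L2_inner \<Omega> (\<lambda>x. uk x - up x) lp))"
      unfolding A_def B_def by (rule alg_id)
    have "0 \<le> ((norm (S w - \<zeta>))^2 / 2 + a * ((L2_norm \<Omega> w)^2/2 - (L2_norm \<Omega> up)^2/2 - L2_inner \<Omega> (\<lambda>x. w x - up x) lp))
       - ((norm (S uk - \<zeta>))^2 / 2 + a * ((L2_norm \<Omega> uk)^2/2 - (L2_norm \<Omega> up)^2/2 - L2_inner \<Omega> (\<lambda>x. uk x - up x) lp))"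
      using r by (simp only: diff_ge_0_iff_ge)
    note this[unfolded nS nw iw]
    then show "0 \<le> t*A + t^2*B" unfolding eq .
  qed
  then show "0 \<le> inner (S uk - \<zeta>) (S y - S uk)
            + a * (L2_inner \<Omega> uk (\<lambda>x. y x - uk x) - L2_inner \<Omega> (\<lambda>x. y x - uk x) lp)"
    unfolding A_def D_def h_def .
qed


lemma iter_opt:
  fixes S :: "(real^'n \<Rightarrow> real) \<Rightarrow> 'y::real_inner"
  assumes S_add: "\<And>v w. v \<in> L2 \<Omega> \<Longrightarrow> w \<in> L2 \<Omega> \<Longrightarrow> S (\<lambda>x. v x + w x) = S v + S w"
    and S_scale: "\<And>c v. v \<in> L2 \<Omega> \<Longrightarrow> S (\<lambda>x. c * v x) = c *\<^sub>R S v"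
    and \<Omega>_meas: "\<Omega> \<in> sets lebesgue" and \<Omega>_bdd: "bounded \<Omega>"
    and ua: "ua \<in> Linf \<Omega>" and ub: "ub \<in> Linf \<Omega>"
    and Uad_ne: "Uad \<Omega> ua ub \<noteq> {}"
    and \<alpha>_pos: "\<And>i. i \<ge> 1 \<Longrightarrow> \<alpha> i > 0"
    and iter: "bregman_iteration \<Omega> S ua ub \<alpha> \<zeta> u lam"
  shows "u k \<in> Uad \<Omega> ua ub"
    and "k \<ge> 1 \<Longrightarrow> v \<in> Uad \<Omega> ua ub \<Longrightarrow>
          inner (S v - S (u k)) (mu_seq S \<alpha> \<zeta> u k) \<le> L2_inner \<Omega> (u k) (\<lambda>x. v x - u k x)"
proof -
  have adj: "\<And>k. is_adjoint_val \<Omega> S (mu_seq S \<alpha> \<zeta> u k) (lam k)"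
    using iter by (simp add: bregman_iteration_def)
  have lamL: "\<And>k. lam k \<in> L2 \<Omega>" using adj by (simp add: is_adjoint_val_def)
  have u0: "u 0 = proj0 ua ub" using iter by (simp add: bregman_iteration_def)
  have stp: "\<And>m. u (Suc m) \<in> L2 \<Omega> \<and>
        (\<forall>v \<in> L2 \<Omega>.
           ereal ((norm (S (u (Suc m)) - \<zeta>))^2 / 2) + ereal (\<alpha> (Suc m)) * bregman_dist \<Omega> ua ub (lam m) (u (Suc m)) (u m)
           \<le> ereal ((norm (S v - \<zeta>))^2 / 2) + ereal (\<alpha> (Suc m)) * bregman_dist \<Omega> ua ub (lam m) v (u m))"
  proof -
    fix m
    have "\<forall>k\<ge>1. u k \<in> L2 \<Omega> \<and>
        (\<forall>v \<in> L2 \<Omega>.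
           ereal ((norm (S (u k) - \<zeta>))^2 / 2) + ereal (\<alpha> k) * bregman_dist \<Omega> ua ub (lam (k - 1)) (u k) (u (k - 1))
           \<le> ereal ((norm (S v - \<zeta>))^2 / 2) + ereal (\<alpha> k) * bregman_dist \<Omega> ua ub (lam (k - 1)) v (u (k - 1)))"
      using iter unfolding bregman_iteration_def by blast
    then show "?thesis m" by (metis One_nat_def Suc_le_mono diff_Suc_1 zero_le)
  qed
  have apos: "\<And>m. \<alpha> (Suc m) > 0" using \<alpha>_pos by simp
  have U: "\<And>k. u k \<in> Uad \<Omega> ua ub"
  proof -
    fix k show "u k \<in> Uad \<Omega> ua ub"
    proof (induct k)
      case 0
      show ?case using proj0_Uad[OF \<Omega>_meas \<Omega>_bdd ua ub Uad_ne] u0 by simp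
    next
      case (Suc m)
      show ?case
        using iter_step(1)[where S=S and \<Omega>=\<Omega> and a="\<alpha> (Suc m)" and uk="u (Suc m)" and up="u m" and lp="lam m"
            and ua=ua and ub=ub and \<zeta>=\<zeta>, OF S_add S_scale apos _ Suc lamL] stp[of m] by blast
    qed
  qed
  then show "u k \<in> Uad \<Omega> ua ub" .
  assume k1: "k \<ge> 1" and vU: "v \<in> Uad \<Omega> ua ub"
  obtain m where km: "k = Suc m" using k1 by (cases k) auto
  have vL: "v \<in> L2 \<Omega>" using vU by (simp add: Uad_def)
  have ukL: "u k \<in> L2 \<Omega>" using U[of k] by (simp add: Uad_def)
  define a where "a = \<alpha> k"
  have apk: "a > 0" unfolding a_def km using apos .
  have o: "0 \<le> inner (S (u k) - \<zeta>) (S v - S (u k))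
            + a * (L2_inner \<Omega> (u k) (\<lambda>x. v x - u k x) - L2_inner \<Omega> (\<lambda>x. v x - u k x) (lam m))"
    unfolding a_def km
    using iter_step(2)[where S=S and \<Omega>=\<Omega> and a="\<alpha> (Suc m)" and uk="u (Suc m)" and up="u m" and lp="lam m"
            and ua=ua and ub=ub and \<zeta>=\<zeta>, OF S_add S_scale apos _ U[of m] lamL, of v] stp[of m] vU by blast
  have hL: "(\<lambda>x. v x - u k x) \<in> L2 \<Omega>" using L2_diff[OF vL ukL] .
  have Sh: "S (\<lambda>x. v x - u k x) = S v - S (u k)"
    by (rule S_diff[where S=S and \<Omega>=\<Omega> and v=v and w="u k", OF S_add vL ukL])
  have ad: "L2_inner \<Omega> (\<lambda>x. v x - u k x) (lam m) = inner (S v - S (u k)) (mu_seq S \<alpha> \<zeta> u m)"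
    using adj[of m] hL Sh by (simp add: is_adjoint_val_def)
  have mu: "mu_seq S \<alpha> \<zeta> u k = mu_seq S \<alpha> \<zeta> u m + (1 / a) *\<^sub>R (\<zeta> - S (u k))"
    unfolding km a_def mu_seq_def by simp
  define D where "D = S v - S (u k)"
  define p where "p = inner D (mu_seq S \<alpha> \<zeta> u m)"
  define q where "q = inner (S (u k) - \<zeta>) D"
  define I where "I = L2_inner \<Omega> (u k) (\<lambda>x. v x - u k x)"
  have o2: "0 \<le> q + a * (I - p)" using o ad unfolding p_def q_def I_def D_def by simp
  have lhs: "inner D (mu_seq S \<alpha> \<zeta> u k) = p - q / a"
    unfolding mu p_def q_def using apk by (simp add: inner_add_right inner_diff_right inner_commute field_simps)
  have "a * (p - q / a) = a * p - q" using apk by (simp add: algebra_simps)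
  also have "\<dots> \<le> a * I" using o2 by (simp add: algebra_simps)
  finally have "p - q / a \<le> I" using apk by simp
  then show "inner (S v - S (u k)) (mu_seq S \<alpha> \<zeta> u k) \<le> L2_inner \<Omega> (u k) (\<lambda>x. v x - u k x)"
    using lhs unfolding D_def I_def by simp
qed

lemma sum_inner_partial:
  fixes a :: "nat \<Rightarrow> 'y::real_inner"
  shows "2 * (\<Sum>i\<in>{1..k}. inner (a i) (\<Sum>j\<in>{1..i}. a j)) = (norm (\<Sum>j\<in>{1..k}. a j))^2 + (\<Sum>i\<in>{1..k}. (norm (a i))^2)"
proof (induct k)
  case 0
  show ?case by simp
next
  case (Suc k)
  define A where "A = (\<Sum>j\<in>{1..k}. a j)"
  have sA: "(\<Sum>j\<in>{1..Suc k}. a j) = A + a (Suc k)" unfolding A_def by simp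
  have n: "(norm (A + a (Suc k)))^2 = (norm A)^2 + 2 * inner A (a (Suc k)) + (norm (a (Suc k)))^2"
    using norm_expand[of A 1 "a (Suc k)"] by simp
  have i: "inner (a (Suc k)) (A + a (Suc k)) = inner A (a (Suc k)) + (norm (a (Suc k)))^2"
    by (simp add: inner_add_right inner_commute power2_norm_eq_inner)
  have "2 * (\<Sum>i\<in>{1..Suc k}. inner (a i) (\<Sum>j\<in>{1..i}. a j))
      = 2 * (\<Sum>i\<in>{1..k}. inner (a i) (\<Sum>j\<in>{1..i}. a j)) + 2 * inner (a (Suc k)) (A + a (Suc k))"
    using sA by simp
  also have "\<dots> = (norm A)^2 + (\<Sum>i\<in>{1..k}. (norm (a i))^2) + 2 * inner (a (Suc k)) (A + a (Suc k))"
    using Suc unfolding A_def by simp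
  also have "\<dots> = (norm (A + a (Suc k)))^2 + (\<Sum>i\<in>{1..Suc k}. (norm (a i))^2)"
    unfolding n i by simp
  finally show ?case unfolding sA .
qed

lemma gamma_step: "gamma_seq \<alpha> (Suc m) = gamma_seq \<alpha> m + 1 / \<alpha> (Suc m)"
  by (simp add: gamma_seq_def)

lemma mu_diff:
  fixes S :: "(real^'n \<Rightarrow> real) \<Rightarrow> 'y::real_inner"
  shows "mu_seq S \<alpha> z\<delta> u\<delta> i - mu_seq S \<alpha> z u i
     = gamma_seq \<alpha> i *\<^sub>R (z\<delta> - z) - (\<Sum>j\<in>{1..i}. (1 / \<alpha> j) *\<^sub>R (S (u\<delta> j) - S (u j)))"
proof -
  have "mu_seq S \<alpha> z\<delta> u\<delta> i - mu_seq S \<alpha> z u i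
      = (\<Sum>j\<in>{1..i}. (1 / \<alpha> j) *\<^sub>R (z\<delta> - S (u\<delta> j)) - (1 / \<alpha> j) *\<^sub>R (z - S (u j)))"
    unfolding mu_seq_def by (simp add: sum_subtractf)
  also have "\<dots> = (\<Sum>j\<in>{1..i}. (1 / \<alpha> j) *\<^sub>R (z\<delta> - z) - (1 / \<alpha> j) *\<^sub>R (S (u\<delta> j) - S (u j)))"
    by (rule sum.cong) (auto simp: algebra_simps)
  also have "\<dots> = gamma_seq \<alpha> i *\<^sub>R (z\<delta> - z) - (\<Sum>j\<in>{1..i}. (1 / \<alpha> j) *\<^sub>R (S (u\<delta> j) - S (u j)))"
    unfolding gamma_seq_def by (simp add: sum_subtractf scaleR_sum_left)
  finally show ?thesis .
qed


lemma amgm_aux: fixes x y :: real shows "x*y - y^2/2 \<le> x^2/2"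
proof -
  have "0 \<le> (x - y)^2" by simp
  then show ?thesis by (simp add: power2_diff)
qed

lemma sq_sum_aux: fixes x y :: real shows "(x + y)^2/2 \<le> x^2 + y^2"
proof -
  have "0 \<le> (x - y)^2" by simp
  then show ?thesis by (simp add: power2_diff power2_sum)
qed

theorem mainTheorem1:
  fixes \<Omega> :: "(real^'n) set"
    and S :: "(real^'n \<Rightarrow> real) \<Rightarrow> 'y::{real_inner, complete_space}"
    and ua ub :: "real^'n \<Rightarrow> real"
    and \<alpha> :: "nat \<Rightarrow> real"
    and z z\<delta> :: 'y
    and \<delta> :: real
    and u u\<delta> lam lam\<delta> :: "nat \<Rightarrow> (real^'n \<Rightarrow> real)"
    and k :: nat
  assumes \<Omega>_meas: "\<Omega> \<in> sets lebesgue" and \<Omega>_bdd: "bounded \<Omega>"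
    and S_add: "\<And>v w. v \<in> L2 \<Omega> \<Longrightarrow> w \<in> L2 \<Omega> \<Longrightarrow> S (\<lambda>x. v x + w x) = S v + S w"
    and S_scale: "\<And>c v. v \<in> L2 \<Omega> \<Longrightarrow> S (\<lambda>x. c * v x) = c *\<^sub>R S v"
    and S_cont: "\<exists>C. \<forall>v \<in> L2 \<Omega>. norm (S v) \<le> C * L2_norm \<Omega> v"
    and ua: "ua \<in> Linf \<Omega>" and ub: "ub \<in> Linf \<Omega>"
    and Uad_ne: "Uad \<Omega> ua ub \<noteq> {}"
    and \<alpha>_pos: "\<And>i. i \<ge> 1 \<Longrightarrow> \<alpha> i > 0"
    and \<alpha>_bdd: "\<exists>C. \<forall>i\<ge>1. \<alpha> i \<le> C"
    and \<delta>_nonneg: "\<delta> \<ge> 0"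
    and noise: "norm (z - z\<delta>) \<le> \<delta>"
    and iter: "bregman_iteration \<Omega> S ua ub \<alpha> z u lam"
    and iter\<delta>: "bregman_iteration \<Omega> S ua ub \<alpha> z\<delta> u\<delta> lam\<delta>"
    and k: "k \<ge> 1"
  shows "(\<Sum>i\<in>{1..k}. (1 / \<alpha> i) * (L2_norm \<Omega> (\<lambda>x. u\<delta> i x - u i x))^2)
           \<le> \<delta>^2 * (\<Sum>i\<in>{1..k}. 1 / (\<alpha> i)^2 + (gamma_seq \<alpha> (i - 1))^2)"
proof -
  have optU: "\<And>j. u j \<in> Uad \<Omega> ua ub"
    by (rule iter_opt(1)[where S=S and \<Omega>=\<Omega> and ua=ua and ub=ub and \<alpha>=\<alpha> and \<zeta>=z and u=u and lam=lam])
       (assumption | rule S_add S_scale \<alpha>_pos \<Omega>_meas \<Omega>_bdd ua ub Uad_ne iter)+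
  have optUd: "\<And>j. u\<delta> j \<in> Uad \<Omega> ua ub"
    by (rule iter_opt(1)[where S=S and \<Omega>=\<Omega> and ua=ua and ub=ub and \<alpha>=\<alpha> and \<zeta>=z\<delta> and u=u\<delta> and lam=lam\<delta>])
       (assumption | rule S_add S_scale \<alpha>_pos \<Omega>_meas \<Omega>_bdd ua ub Uad_ne iter\<delta>)+
  have optI: "\<And>j v. 1 \<le> j \<Longrightarrow> v \<in> Uad \<Omega> ua ub \<Longrightarrow>
          inner (S v - S (u j)) (mu_seq S \<alpha> z u j) \<le> L2_inner \<Omega> (u j) (\<lambda>x. v x - u j x)"
    by (rule iter_opt(2)[where S=S and \<Omega>=\<Omega> and ua=ua and ub=ub and \<alpha>=\<alpha> and \<zeta>=z and u=u and lam=lam])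
       (assumption | rule S_add S_scale \<alpha>_pos \<Omega>_meas \<Omega>_bdd ua ub Uad_ne iter)+
  have optId: "\<And>j v. 1 \<le> j \<Longrightarrow> v \<in> Uad \<Omega> ua ub \<Longrightarrow>
          inner (S v - S (u\<delta> j)) (mu_seq S \<alpha> z\<delta> u\<delta> j) \<le> L2_inner \<Omega> (u\<delta> j) (\<lambda>x. v x - u\<delta> j x)"
    by (rule iter_opt(2)[where S=S and \<Omega>=\<Omega> and ua=ua and ub=ub and \<alpha>=\<alpha> and \<zeta>=z\<delta> and u=u\<delta> and lam=lam\<delta>])
       (assumption | rule S_add S_scale \<alpha>_pos \<Omega>_meas \<Omega>_bdd ua ub Uad_ne iter\<delta>)+
  define \<eta> where "\<eta> = z\<delta> - z"
  define av where "av = (\<lambda>i. (1 / \<alpha> i) *\<^sub>R (S (u\<delta> i) - S (u i)))"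
  define A where "A = (\<lambda>i. \<Sum>j\<in>{1..i}. av j)"
  define g where "g = gamma_seq \<alpha>"
  define E where "E = (\<lambda>i. (L2_norm \<Omega> (\<lambda>x. u\<delta> i x - u i x))^2)"
  have neta: "norm \<eta> \<le> \<delta>" using noise unfolding \<eta>_def by (simp add: norm_minus_commute)
  have gnn: "\<And>i. 0 \<le> g i"
    unfolding g_def gamma_seq_def by (rule sum_nonneg) (use \<alpha>_pos in \<open>auto simp: less_imp_le\<close>)
  have step: "\<And>i. i \<in> {1..k} \<Longrightarrow> (1 / \<alpha> i) * E i \<le> g i * \<delta> * norm (av i) - inner (av i) (A i)"
  proof -
    fix i assume "i \<in> {1..k}"
    then have i1: "1 \<le> i" by simp
    have ap: "\<alpha> i > 0" using \<alpha>_pos i1 .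
    have U1: "u i \<in> Uad \<Omega> ua ub" by (rule optU)
    have U2: "u\<delta> i \<in> Uad \<Omega> ua ub" by (rule optUd)
    have uL: "u i \<in> L2 \<Omega>" using U1 by (simp add: Uad_def)
    have udL: "u\<delta> i \<in> L2 \<Omega>" using U2 by (simp add: Uad_def)
    have o1: "inner (S (u\<delta> i) - S (u i)) (mu_seq S \<alpha> z u i) \<le> L2_inner \<Omega> (u i) (\<lambda>x. u\<delta> i x - u i x)"
      by (rule optI[OF i1 U2])
    have o2: "inner (S (u i) - S (u\<delta> i)) (mu_seq S \<alpha> z\<delta> u\<delta> i) \<le> L2_inner \<Omega> (u\<delta> i) (\<lambda>x. u i x - u\<delta> i x)"
      by (rule optId[OF i1 U1])
    have i1': "integrable (lebesgue_on \<Omega>) (\<lambda>x. u i x * (u\<delta> i x - u i x))"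
      by (rule L2_prod_int[OF uL L2_diff[OF udL uL]])
    have i2': "integrable (lebesgue_on \<Omega>) (\<lambda>x. u\<delta> i x * (u i x - u\<delta> i x))"
      by (rule L2_prod_int[OF udL L2_diff[OF uL udL]])
    have fe: "(\<lambda>x. u i x * (u\<delta> i x - u i x) + 1 * (u\<delta> i x * (u i x - u\<delta> i x))) = (\<lambda>x. - ((u\<delta> i x - u i x)^2))"
      by (rule ext) (simp add: power2_eq_square algebra_simps)
    have "(LINT x|lebesgue_on \<Omega>. u i x * (u\<delta> i x - u i x) + 1 * (u\<delta> i x * (u i x - u\<delta> i x)))
        = L2_inner \<Omega> (u i) (\<lambda>x. u\<delta> i x - u i x) + 1 * L2_inner \<Omega> (u\<delta> i) (\<lambda>x. u i x - u\<delta> i x)"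
      unfolding L2_inner_def by (rule int_lin2[OF i1' i2'])
    then have Eeq: "E i = - (L2_inner \<Omega> (u i) (\<lambda>x. u\<delta> i x - u i x) + L2_inner \<Omega> (u\<delta> i) (\<lambda>x. u i x - u\<delta> i x))"
      unfolding fe E_def L2_norm_sq by (simp add: Bochner_Integration.integral_minus)
    have md: "mu_seq S \<alpha> z\<delta> u\<delta> i - mu_seq S \<alpha> z u i = g i *\<^sub>R \<eta> - A i"
      unfolding g_def \<eta>_def A_def av_def by (rule mu_diff)
    have Dv: "S (u\<delta> i) - S (u i) = \<alpha> i *\<^sub>R av i" using ap by (simp add: av_def)
    have x2: "inner (S (u i) - S (u\<delta> i)) (mu_seq S \<alpha> z\<delta> u\<delta> i) = - inner (S (u\<delta> i) - S (u i)) (mu_seq S \<alpha> z\<delta> u\<delta> i)"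
      by (metis inner_minus_left minus_diff_eq)
    have x1: "inner (S (u\<delta> i) - S (u i)) (mu_seq S \<alpha> z\<delta> u\<delta> i - mu_seq S \<alpha> z u i)
        = inner (S (u\<delta> i) - S (u i)) (mu_seq S \<alpha> z\<delta> u\<delta> i) - inner (S (u\<delta> i) - S (u i)) (mu_seq S \<alpha> z u i)"
      by (rule inner_diff_right)
    have "E i \<le> inner (S (u\<delta> i) - S (u i)) (mu_seq S \<alpha> z\<delta> u\<delta> i - mu_seq S \<alpha> z u i)"
      using o1 o2 Eeq x1 x2 by linarith
    also have "\<dots> = \<alpha> i * inner (av i) (g i *\<^sub>R \<eta> - A i)" unfolding md Dv by simp
    finally have Ei: "E i \<le> \<alpha> i * inner (av i) (g i *\<^sub>R \<eta> - A i)" .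
    have "(1 / \<alpha> i) * E i \<le> (1 / \<alpha> i) * (\<alpha> i * inner (av i) (g i *\<^sub>R \<eta> - A i))"
      by (rule mult_left_mono[OF Ei]) (use ap in simp)
    also have "\<dots> = inner (av i) (g i *\<^sub>R \<eta> - A i)" using ap by simp
    also have "\<dots> = g i * inner (av i) \<eta> - inner (av i) (A i)" by (simp add: inner_diff_right)
    also have "\<dots> \<le> g i * \<delta> * norm (av i) - inner (av i) (A i)"
    proof -
      have "inner (av i) \<eta> \<le> norm (av i) * norm \<eta>" by (rule norm_cauchy_schwarz)
      also have "\<dots> \<le> norm (av i) * \<delta>" by (rule mult_left_mono[OF neta]) simp
      finally have "g i * inner (av i) \<eta> \<le> g i * (norm (av i) * \<delta>)" by (rule mult_left_mono) (rule gnn)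
      then show ?thesis by (simp add: algebra_simps)
    qed
    finally show "(1 / \<alpha> i) * E i \<le> g i * \<delta> * norm (av i) - inner (av i) (A i)" .
  qed
  have ident: "2 * (\<Sum>i\<in>{1..k}. inner (av i) (A i)) = (norm (A k))^2 + (\<Sum>i\<in>{1..k}. (norm (av i))^2)"
    unfolding A_def by (rule sum_inner_partial)
  have "(\<Sum>i\<in>{1..k}. (1 / \<alpha> i) * (L2_norm \<Omega> (\<lambda>x. u\<delta> i x - u i x))^2)
      = (\<Sum>i\<in>{1..k}. (1 / \<alpha> i) * E i)" unfolding E_def ..
  also have "\<dots> \<le> (\<Sum>i\<in>{1..k}. g i * \<delta> * norm (av i) - inner (av i) (A i))"
    by (rule sum_mono) (rule step)
  also have "\<dots> = (\<Sum>i\<in>{1..k}. g i * \<delta> * norm (av i)) - (\<Sum>i\<in>{1..k}. inner (av i) (A i))"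
    by (rule sum_subtractf)
  also have "\<dots> \<le> (\<Sum>i\<in>{1..k}. g i * \<delta> * norm (av i)) - (\<Sum>i\<in>{1..k}. (norm (av i))^2) / 2"
  proof -
    have "0 \<le> (norm (A k))^2" by simp
    then show ?thesis using ident by linarith
  qed
  also have "\<dots> = (\<Sum>i\<in>{1..k}. g i * \<delta> * norm (av i) - (norm (av i))^2 / 2)"
    by (simp add: sum_subtractf sum_divide_distrib)
  also have "\<dots> \<le> (\<Sum>i\<in>{1..k}. (g i * \<delta>)^2 / 2)"
    by (rule sum_mono) (rule amgm_aux)
  also have "\<dots> \<le> (\<Sum>i\<in>{1..k}. \<delta>^2 * (1 / (\<alpha> i)^2 + (gamma_seq \<alpha> (i - 1))^2))"
  proof (rule sum_mono)
    fix i assume "i \<in> {1..k}"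
    then obtain m where im: "i = Suc m" by (cases i) auto
    have gi: "g i = gamma_seq \<alpha> (i - 1) + 1 / \<alpha> i" unfolding g_def im by (simp add: gamma_step)
    have "(g i)^2 / 2 \<le> (gamma_seq \<alpha> (i - 1))^2 + (1 / \<alpha> i)^2" unfolding gi by (rule sq_sum_aux)
    then have "\<delta>^2 * ((g i)^2 / 2) \<le> \<delta>^2 * ((gamma_seq \<alpha> (i - 1))^2 + (1 / \<alpha> i)^2)"
      by (rule mult_left_mono) simp
    then show "(g i * \<delta>)^2 / 2 \<le> \<delta>^2 * (1 / (\<alpha> i)^2 + (gamma_seq \<alpha> (i - 1))^2)"
      by (simp add: power_mult_distrib power_one_over algebra_simps)
  qed
  also have "\<dots> = \<delta>^2 * (\<Sum>i\<in>{1..k}. 1 / (\<alpha> i)^2 + (gamma_seq \<alpha> (i - 1))^2)"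
    by (simp add: sum_distrib_left)
  finally show ?thesis .
qed

end
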